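(* Under the standing setup, for all $t\ge0$ and $u_0\in\mathbb R^d$, $\mathscr S(t)u_0=\sup_{n\in\mathbb N}\mathcal E_{t/n}^{\,n}u_0=\lim_{n\to\infty}\mathcal E_{2^{-n}t}^{\,2^n}u_0,$ where $\mathcal E_h^{\,k}$ denotes the $k$-fold composition of $\mathcal E_h$.
   Context: Standing setup: $d\in\mathbb N$; vectors in $\mathbb R^d$; inequalities and suprema of vectors are componentwise; reals are identified with constant vectors. A $Q$-matrix is $q\in\mathbb R^{d\times d}$ with $q_{ii}\le0$, $q_{ij}\ge0$ ($i\ne j$), $\sum_jq_{ij}=0$. Let $\mathcal P$ be a set of $Q$-matrices and $f=(f_q)_{q\in\mathcal P}\subset\mathbb R^d$ with $\sup_{q\in\mathcal P}f_q=f_{q_0}=0$ for some $q_0\in\mathcal P$, such that $\mathcal Qu:=\sup_{q\in\mathcal P}(qu+f_q)$ is finite for every $u\in\mathbb R^d$. For $q\in\mathcal P$, $t\ge0$: $S_q(t)u_0:=e^{tq}u_0+\int_0^te^{sq}f_q\,ds$. For $h\ge0$: $\mathcal E_hu_0:=\sup_{q\in\mathcal P}S_q(h)u_0$. $P$ is the set of finite subsets $\pi\subset[0,\infty)$ with $0\in\pi$; $P_t:=\{\pi\in P:\max\pi=t\}$. For $\pi=\{t_0,\dots,t_m\}$ with $0=t_0<\dots<t_m$, $m\ge1$, $\mathcal E_\pi:=\mathcal E_{t_1-t_0}\circ\cdots\circ\mathcal E_{t_m-t_{m-1}}$, and $\mathcal E_{\{0\}}:=\mathcal E_0$. The Nisio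 semigroup of $(\mathcal P,f)$ is $\mathscr S(t)u_0:=\sup_{\pi\in P_t}\mathcal E_\pi u_0$. *)

theory Defs
  imports "HOL-Analysis.Analysis"
begin

text \<open>Vectors in R^d are \<open>real^'n\<close>, d = CARD('n); matrices are \<open>real^'n^'n\<close>.\<close>

definition Q_matrix :: "real^'n^'n \<Rightarrow> bool" where
  "Q_matrix q \<longleftrightarrow> (\<forall>i. q$i$i \<le> 0) \<and> (\<forall>i j. i \<noteq> j \<longrightarrow> q$i$j \<ge> 0) \<and> (\<forall>i. (\<Sum>j\<in>UNIV. q$i$j) = 0)"

fun matpow :: "real^'n^'n \<Rightarrow> nat \<Rightarrow> real^'n^'n" where
  "matpow A 0 = mat 1"
| "matpow A (Suc k) = A ** matpow A k"

definition mexp :: "real^'n^'n \<Rightarrow> real^'n^'n" where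
  "mexp A = (\<Sum>k. (1 / (fact k :: real)) *\<^sub>R matpow A k)"

definition vsup :: "(real^'n) set \<Rightarrow> real^'n" where
  "vsup A = (\<chi> i. Sup ((\<lambda>x. x$i) ` A))"

definition Sq :: "real^'n^'n \<Rightarrow> real^'n \<Rightarrow> real \<Rightarrow> real^'n \<Rightarrow> real^'n" where
  "Sq q fq t u0 = mexp (t *\<^sub>R q) *v u0 + integral {0..t} (\<lambda>s. mexp (s *\<^sub>R q) *v fq)"

definition Eh :: "(real^'n^'n) set \<Rightarrow> (real^'n^'n \<Rightarrow> real^'n) \<Rightarrow> real \<Rightarrow> real^'n \<Rightarrow> real^'n" where
  "Eh P f h u0 = vsup ((\<lambda>q. Sq q (f q) h u0) ` P)"

definition partitions_upto :: "real \<Rightarrow> real set set" where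
  "partitions_upto t = {\<pi>. finite \<pi> \<and> \<pi> \<subseteq> {0..} \<and> 0 \<in> \<pi> \<and> Max \<pi> = t}"

text \<open>For \<open>\<pi> = {t0<...<tm}\<close>, \<open>E_\<pi> = E_{t1-t0} \<circ> ... \<circ> E_{tm-t(m-1)}\<close>; \<open>E_{0} = E_0\<close>.\<close>
definition Epi :: "(real^'n^'n) set \<Rightarrow> (real^'n^'n \<Rightarrow> real^'n) \<Rightarrow> real set \<Rightarrow> real^'n \<Rightarrow> real^'n" where
  "Epi P f \<pi> u0 =
     (let ts = sorted_list_of_set \<pi>;
          hs = map2 (\<lambda>a b. b - a) ts (tl ts)
      in if hs = [] then Eh P f 0 u0 else foldr (Eh P f) hs u0)"

definition Nisio :: "(real^'n^'n) set \<Rightarrow> (real^'n^'n \<Rightarrow> real^'n) \<Rightarrow> real \<Rightarrow> real^'n \<Rightarrow> real^'n" where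
  "Nisio P f t u0 = vsup ((\<lambda>\<pi>. Epi P f \<pi> u0) ` partitions_upto t)"

end

theory Submission
  imports Defs
begin


typedef ('n::finite) sqm = "UNIV :: (real^'n^'n) set" morphisms mat_of sqm by simp
setup_lifting type_definition_sqm

instantiation sqm :: (finite) "{ring_1, real_normed_algebra_1}"
begin
lift_definition zero_sqm :: "'a sqm" is "0" .
lift_definition one_sqm :: "'a sqm" is "mat 1" .
lift_definition plus_sqm :: "'a sqm \<Rightarrow> 'a sqm \<Rightarrow> 'a sqm" is "(+)" .
lift_definition minus_sqm :: "'a sqm \<Rightarrow> 'a sqm \<Rightarrow> 'a sqm" is "(-)" .
lift_definition uminus_sqm :: "'a sqm \<Rightarrow> 'a sqm" is "uminus" .
lift_definition times_sqm :: "'a sqm \<Rightarrow> 'a sqm \<Rightarrow> 'a sqm" is "(**)" .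
lift_definition scaleR_sqm :: "real \<Rightarrow> 'a sqm \<Rightarrow> 'a sqm" is "scaleR" .
lift_definition norm_sqm :: "'a sqm \<Rightarrow> real" is "\<lambda>A. onorm ((*v) A)" .
definition dist_sqm :: "'a sqm \<Rightarrow> 'a sqm \<Rightarrow> real" where "dist_sqm a b = norm (a - b)"
definition sgn_sqm :: "'a sqm \<Rightarrow> 'a sqm" where "sgn_sqm x = scaleR (inverse (norm x)) x"
definition uniformity_sqm :: "('a sqm \<times> 'a sqm) filter" where
  "uniformity_sqm = (INF e\<in>{0 <..}. principal {(x, y). dist x y < e})"
definition open_sqm :: "'a sqm set \<Rightarrow> bool"
  where "open_sqm S = (\<forall>x\<in>S. \<forall>\<^sub>F (x', y) in uniformity. x' = x \<longrightarrow> y \<in> S)"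
instance
proof
  fix a b c :: "'a sqm" and r s :: real
  show "a * b * c = a * (b * c)" by transfer (simp add: matrix_mul_assoc)
  show "(a + b) * c = a * c + b * c" by transfer (simp add: matrix_matrix_mult_def vec_eq_iff distrib_right sum.distrib)
  show "a * (b + c) = a * b + a * c" by transfer (simp add: matrix_add_ldistrib)
  show "1 * a = a" by transfer simp
  show "a * 1 = a" by transfer simp
  show "(0::'a sqm) \<noteq> 1" apply transfer apply (simp add: mat_def vec_eq_iff) done
  show "a + b + c = a + (b + c)" by transfer simp
  show "a + b = b + a" by transfer simp
  show "0 + a = a" by transfer simp
  show "- a + a = 0" by transfer simp
  show "a - b = a + - b" by transfer simp
  show "r *\<^sub>R (a + b) = r *\<^sub>R a + r *\<^sub>R b" by transfer (simp add: scaleR_add_right)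
  show "(r + s) *\<^sub>R a = r *\<^sub>R a + s *\<^sub>R a" by transfer (simp add: scaleR_add_left)
  show "r *\<^sub>R s *\<^sub>R a = (r * s) *\<^sub>R a" by transfer simp
  show "1 *\<^sub>R a = a" by transfer simp
  show "r *\<^sub>R a * b = r *\<^sub>R (a * b)" by transfer (simp add: matrix_matrix_mult_def vec_eq_iff sum_distrib_left mult.assoc)
  show "a * r *\<^sub>R b = r *\<^sub>R (a * b)" by transfer (simp add: matrix_matrix_mult_def vec_eq_iff sum_distrib_left mult.left_commute)
  show "dist a b = norm (a - b)" by (simp add: dist_sqm_def)
  show "sgn a = inverse (norm a) *\<^sub>R a" by (simp add: sgn_sqm_def)
  show "(uniformity :: ('a sqm \<times> 'a sqm) filter) = (INF e\<in>{0 <..}. principal {(x, y). dist x y < e})"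
    by (simp add: uniformity_sqm_def)
  fix U :: "'a sqm set"
  show "open U = (\<forall>x\<in>U. \<forall>\<^sub>F (x', y) in uniformity. x' = x \<longrightarrow> y \<in> U)"
    by (simp add: open_sqm_def)
  show "(norm a = 0) = (a = 0)"
    apply transfer
    by (simp add: onorm_eq_0[OF matrix_vector_mul_bounded_linear] matrix_eq[where B=0])
  show "norm (a + b) \<le> norm a + norm b"
    apply transfer
    subgoal for a b
    proof -
      have e: "(*v) (a+b) = (\<lambda>x. a *v x + b *v x)" by (rule ext) (simp add: matrix_vector_mult_add_rdistrib)
      show ?thesis unfolding e
        by (rule onorm_triangle[OF matrix_vector_mul_bounded_linear matrix_vector_mul_bounded_linear])
    qed
    done
  show "norm (r *\<^sub>R a) = \<bar>r\<bar> * norm a"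
    apply transfer
    subgoal for r a
    proof -
      have e: "(*v) (r *\<^sub>R a) = (\<lambda>x. r *\<^sub>R (a *v x))" by (rule ext) (simp add: matrix_vector_mult_def vec_eq_iff sum_distrib_left mult.assoc)
      show ?thesis unfolding e
        by (rule onorm_scaleR[OF matrix_vector_mul_bounded_linear])
    qed
    done
  show "norm (a * b) \<le> norm a * norm b"
    apply transfer
    subgoal for a b
    proof -
      have e: "(*v) (a ** b) = (*v) a o (*v) b" by (rule ext) (simp add: matrix_vector_mul_assoc)
      show ?thesis unfolding e
        by (rule onorm_compose) (rule matrix_vector_mul_bounded_linear)+
    qed
    done
  show "norm (1::'a sqm) = 1"
    apply transfer
  proof -
    have e: "(*v) (mat 1 :: real^'a^'a) = (\<lambda>x. x)" by (rule ext) simp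
    show "onorm ((*v) (mat 1 :: real^'a^'a)) = 1" unfolding e by (rule onorm_id)
  qed
qed
end

lemma norm_mat_le_onorm: "norm (A::real^'n^'n) \<le> real CARD('n) * real CARD('n) * onorm ((*v) A)"
proof -
  have "norm A \<le> (\<Sum>i\<in>UNIV. norm (A$i))"
    unfolding norm_vec_def by (rule L2_set_le_sum) simp
  also have "\<dots> \<le> (\<Sum>i\<in>(UNIV::'n set). real CARD('n) * onorm ((*v) A))"
  proof (rule sum_mono)
    fix i
    have "norm (A$i) \<le> (\<Sum>j\<in>UNIV. \<bar>A$i$j\<bar>)" by (rule norm_le_l1_cart)
    also have "\<dots> \<le> (\<Sum>j\<in>(UNIV::'n set). onorm ((*v) A))"
      by (rule sum_mono) (rule matrix_component_le_onorm)
    finally show "norm (A$i) \<le> real CARD('n) * onorm ((*v) A)" by simp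
  qed
  finally show ?thesis by (simp add: mult.assoc)
qed

lemma onorm_le_norm_mat: "onorm ((*v) (A::real^'n^'n)) \<le> real CARD('n) * real CARD('n) * norm A"
proof (rule onorm_le_matrix_component)
  fix k l :: 'n
  have "\<bar>A$k$l\<bar> \<le> norm (A$k)" by (rule component_le_norm_cart)
  also have "\<dots> \<le> norm A" by (rule Finite_Cartesian_Product.norm_nth_le)
  finally show "\<bar>A$k$l\<bar> \<le> norm A" .
qed

lemma norm_sqm_def': "norm x = onorm ((*v) (mat_of x))"
  by transfer simp

lemma mat_of_diff: "mat_of (x - y) = mat_of x - mat_of y" by transfer simp
lemma mat_of_add: "mat_of (x + y) = mat_of x + mat_of y" by transfer simp
lemma mat_of_scaleR: "mat_of (r *\<^sub>R x) = r *\<^sub>R mat_of x" by transfer simp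
lemma mat_of_times: "mat_of (x * y) = mat_of x ** mat_of y" by transfer simp
lemma mat_of_one: "mat_of 1 = mat 1" by transfer simp
lemma mat_of_zero: "mat_of 0 = 0" by transfer simp

lemma bounded_linear_mat_of: "bounded_linear (mat_of :: 'n::finite sqm \<Rightarrow> _)"
  apply (rule bounded_linear_intro[where K="real CARD('n) * real CARD('n)"])
  using norm_mat_le_onorm by (auto simp: mat_of_add mat_of_scaleR norm_sqm_def' mult.commute)

instance sqm :: (finite) banach
proof
  fix X :: "nat \<Rightarrow> 'a sqm"
  assume C: "Cauchy X"
  let ?K = "real CARD('a) * real CARD('a)"
  have Kp: "?K > 0" by simp
  have "Cauchy (\<lambda>n. mat_of (X n))"
  proof (rule CauchyI)
    fix e :: real assume "e > 0"
    then obtain M where M: "\<forall>m\<ge>M. \<forall>n\<ge>M. norm (X m - X n) < e / ?K"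
      using CauchyD[OF C, of "e / ?K"] Kp by auto
    show "\<exists>M. \<forall>m\<ge>M. \<forall>n\<ge>M. norm (mat_of (X m) - mat_of (X n)) < e"
    proof (intro exI allI impI)
      fix m n assume "m \<ge> M" "n \<ge> M"
      then have "norm (X m - X n) < e / ?K" using M by auto
      then have "?K * norm (X m - X n) < e" using Kp by (simp add: field_simps)
      moreover have "norm (mat_of (X m) - mat_of (X n)) \<le> ?K * norm (X m - X n)"
        using norm_mat_le_onorm[of "mat_of (X m - X n)"] by (simp add: norm_sqm_def' mat_of_diff)
      ultimately show "norm (mat_of (X m) - mat_of (X n)) < e" by linarith
    qed
  qed
  then obtain L where L: "(\<lambda>n. mat_of (X n)) \<longlonglongrightarrow> L"
    using Cauchy_convergent_iff convergent_def by blast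
  have "X \<longlonglongrightarrow> sqm L"
  proof (rule LIMSEQ_I)
    fix r :: real assume "r > 0"
    then obtain N where N: "\<forall>n\<ge>N. norm (mat_of (X n) - L) < r / ?K"
      using LIMSEQ_D[OF L, of "r / ?K"] Kp by auto
    show "\<exists>no. \<forall>n\<ge>no. norm (X n - sqm L) < r"
    proof (intro exI allI impI)
      fix n assume "n \<ge> N"
      then have "norm (mat_of (X n) - L) < r / ?K" using N by auto
      then have "?K * norm (mat_of (X n) - L) < r" using Kp by (simp add: field_simps)
      moreover have "norm (X n - sqm L) \<le> ?K * norm (mat_of (X n) - L)"
        using onorm_le_norm_mat[of "mat_of (X n) - L"]
        by (simp add: norm_sqm_def' mat_of_diff sqm_inverse)
      ultimately show "norm (X n - sqm L) < r" by linarith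
    qed
  qed
  then show "convergent X" by (auto simp: convergent_def)
qed


lemma mat_of_sqm[simp]: "mat_of (sqm y) = y" by (simp add: sqm_inverse)

lemma bl_exp_suminf:
  assumes "bounded_linear L"
  shows "L (exp Y) = (\<Sum>n. L (Y^n /\<^sub>R fact n))" "summable (\<lambda>n. L (Y^n /\<^sub>R fact n))"
  using bounded_linear.suminf[OF assms summable_exp_generic[of Y]]
    bounded_linear.summable[OF assms summable_exp_generic[of Y]]
  by (simp_all add: exp_def)

lemma mat_of_power: "mat_of (x ^ n) = matpow (mat_of x) n"
  by (induction n) (simp_all add: mat_of_one mat_of_times)

lemma mexp_conv: "mexp M = mat_of (exp (sqm M))"
proof -
  have "mat_of (exp (sqm M)) = (\<Sum>n. mat_of (sqm M ^ n /\<^sub>R fact n))"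
    by (rule bl_exp_suminf(1)[OF bounded_linear_mat_of])
  also have "\<dots> = (\<Sum>n. (1 / fact n) *\<^sub>R matpow M n)"
    by (simp add: mat_of_scaleR mat_of_power sqm_inverse divide_inverse)
  finally show ?thesis by (simp add: mexp_def)
qed

lemma sqm_scaleR: "sqm (s *\<^sub>R q) = s *\<^sub>R sqm q"
  by (metis mat_of_inverse mat_of_scaleR sqm_inverse UNIV_I)

lemma mexp_scale: "mexp (s *\<^sub>R q) = mat_of (exp (s *\<^sub>R sqm q))"
  by (simp add: mexp_conv sqm_scaleR)

lemma mexp_zero: "mexp (0 *\<^sub>R q) = mat 1"
  using mexp_scale[of 0 q] by (simp add: mat_of_one)

lemma mexp_add: "mexp ((a + b) *\<^sub>R q) = mexp (a *\<^sub>R q) ** mexp (b *\<^sub>R q)"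
proof -
  have c: "(a *\<^sub>R sqm q) * (b *\<^sub>R sqm q) = (b *\<^sub>R sqm q) * (a *\<^sub>R sqm q)"
    by (simp add: mult.commute)
  have "exp ((a + b) *\<^sub>R sqm q) = exp (a *\<^sub>R sqm q) * exp (b *\<^sub>R sqm q)"
    using exp_add_commuting[OF c] by (simp add: scaleR_add_left)
  then show ?thesis by (simp add: mexp_scale mat_of_times)
qed

lemma matpow_nonneg: "(\<And>i j. A$i$j \<ge> 0) \<Longrightarrow> matpow A n $ i $ j \<ge> (0::real)"
proof (induction n arbitrary: i j)
  case 0 then show ?case by (simp add: mat_def)
next
  case (Suc n) then show ?case
    by (simp add: matrix_matrix_mult_def sum_nonneg)
qed

lemma bl_entry: "bounded_linear (\<lambda>x::'n::finite sqm. mat_of x $ i $ j)"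
  by (rule bounded_linear_compose[OF bounded_linear_vec_nth
        bounded_linear_compose[OF bounded_linear_vec_nth bounded_linear_mat_of]])

lemma exp_nonneg_entries:
  assumes "\<And>i j. mat_of Y $ i $ j \<ge> 0"
  shows "mat_of (exp Y) $ i $ j \<ge> 0"
proof -
  note b = bl_exp_suminf[OF bl_entry[of i j], of Y]
  have "\<And>n. mat_of (Y^n /\<^sub>R fact n) $ i $ j \<ge> 0"
    using matpow_nonneg[of "mat_of Y", OF assms]
    by (simp add: mat_of_scaleR mat_of_power)
  then show ?thesis unfolding b(1) by (intro suminf_nonneg b(2))
qed

lemma Q_nonneg:
  assumes Q: "Q_matrix q" and s: "s \<ge> 0"
  shows "mexp (s *\<^sub>R q) $ i $ j \<ge> 0"
proof -
  define c where "c = (\<Sum>k\<in>UNIV. \<bar>q$k$k\<bar>)"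
  define A where "A = q + c *\<^sub>R mat 1"
  have A0: "A $ k $ l \<ge> 0" for k l
  proof (cases "k = l")
    case True
    have "\<bar>q$k$k\<bar> \<le> c" unfolding c_def
      by (rule member_le_sum) auto
    then show ?thesis using True by (simp add: A_def mat_def)
  next
    case False then show ?thesis using Q by (simp add: A_def mat_def Q_matrix_def)
  qed
  have Y0: "mat_of (s *\<^sub>R sqm A) $ k $ l \<ge> 0" for k l
    using A0[of k l] s by (simp add: mat_of_scaleR sqm_inverse)
  have "mat_of (s *\<^sub>R sqm A + (- (s * c)) *\<^sub>R 1) = mat_of (s *\<^sub>R sqm q)"
    unfolding A_def
    by (simp add: mat_of_add mat_of_diff mat_of_scaleR mat_of_one sqm_inverse algebra_simps)
  then have dec: "s *\<^sub>R sqm q = s *\<^sub>R sqm A + of_real (- (s * c))"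
    unfolding of_real_def by (simp add: mat_of_inject)
  have com: "(s *\<^sub>R sqm A) * of_real (- (s * c)) = of_real (- (s * c)) * (s *\<^sub>R sqm A)"
    by (simp add: of_real_def)
  have "exp (s *\<^sub>R sqm q) = exp (s *\<^sub>R sqm A) * of_real (exp (- (s * c)))"
    unfolding dec exp_add_commuting[OF com] exp_of_real ..
  then have "mexp (s *\<^sub>R q) = exp (- (s * c)) *\<^sub>R mat_of (exp (s *\<^sub>R sqm A))"
    by (simp add: mexp_scale of_real_def mat_of_scaleR)
  then show ?thesis
    using exp_nonneg_entries[OF Y0, of i j] by simp
qed

lemma bl_apply: "bounded_linear (\<lambda>x::'n::finite sqm. mat_of x *v w)"
proof (rule bounded_linear_intro[where K="norm w"])
  fix x y :: "'n sqm" and r :: real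
  show "mat_of (x + y) *v w = mat_of x *v w + mat_of y *v w"
    by (simp add: mat_of_add matrix_vector_mult_add_rdistrib)
  show "mat_of (r *\<^sub>R x) *v w = r *\<^sub>R (mat_of x *v w)"
    by (simp add: mat_of_scaleR matrix_vector_mult_def vec_eq_iff sum_distrib_left mult.assoc)
  show "norm (mat_of x *v w) \<le> norm x * norm w"
    unfolding norm_sqm_def' by (rule onorm[OF matrix_vector_mul_bounded_linear])
qed

lemma matpow_Suc': "matpow A (Suc m) = matpow A m ** A"
  by (induction m) (simp_all add: matrix_mul_assoc)

lemma Q_row: "Q_matrix q \<Longrightarrow> q *v 1 = 0"
  by (simp add: Q_matrix_def matrix_vector_mult_def vec_eq_iff)

lemma mexp_row:
  assumes "q *v 1 = 0"
  shows "mexp (s *\<^sub>R q) *v 1 = 1"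
proof -
  let ?Y = "s *\<^sub>R sqm q"
  note b = bl_exp_suminf[OF bl_apply[of 1], of ?Y]
  have t: "mat_of (?Y^n /\<^sub>R fact n) *v 1 = (if n = 0 then 1 else 0)" for n
  proof (cases n)
    case 0 then show ?thesis by (simp add: mat_of_one)
  next
    case (Suc m)
    have sq: "(s *\<^sub>R q) *v 1 = 0"
      using assms by (simp add: matrix_vector_mult_def vec_eq_iff sum_distrib_left[symmetric] mult.assoc)
    have "matpow (s *\<^sub>R q) (Suc m) *v 1 = 0"
      by (simp only: matpow_Suc' matrix_vector_mul_assoc[symmetric] sq matrix_vector_mult_0_right)
    then have "mat_of (?Y^n) *v 1 = 0" using Suc
      by (simp only: mat_of_power mat_of_scaleR mat_of_sqm)
    then show ?thesis using Suc
      by (simp add: mat_of_scaleR matrix_vector_mult_def vec_eq_iff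
           sum_distrib_left[symmetric] mult.assoc)
  qed
  have "(\<lambda>n. mat_of (?Y^n /\<^sub>R fact n) *v 1) sums 1"
    unfolding t using sums_single[of 0 "\<lambda>_. 1::real^'a"] by simp
  then show ?thesis unfolding mexp_scale b(1) by (simp add: sums_iff)
qed

lemma mexp_deriv:
  "((\<lambda>s. mexp (s *\<^sub>R q) *v w) has_vector_derivative (mexp (s *\<^sub>R q) *v (q *v w))) (at s within T)"
proof -
  have "((\<lambda>s. mat_of (exp (s *\<^sub>R sqm q)) *v w) has_vector_derivative
          (mat_of (exp (s *\<^sub>R sqm q) * sqm q) *v w)) (at s within T)"
    by (rule bounded_linear.has_vector_derivative[OF bl_apply exp_scaleR_has_vector_derivative_right])
  then show ?thesis
    by (simp add: mexp_scale mat_of_times sqm_inverse matrix_vector_mul_assoc)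
qed

lemma mexp_cont: "continuous_on S (\<lambda>s. mexp (s *\<^sub>R q) *v w)"
  unfolding continuous_on_eq_continuous_within
  using has_vector_derivative_continuous[OF mexp_deriv] by blast


lemma vec_scaleR_one: "vec c = c *\<^sub>R (1::real^'n)"
  by (simp add: vec_eq_iff)

lemma mv_mono:
  assumes "\<And>i j. M$i$j \<ge> (0::real)" "u \<le> v"
  shows "M *v u \<le> M *v v"
  using assms unfolding less_eq_vec_def
  by (auto simp: matrix_vector_mult_def intro!: sum_mono mult_left_mono)

lemma T_mono: "Q_matrix q \<Longrightarrow> s \<ge> 0 \<Longrightarrow> u \<le> v \<Longrightarrow> mexp (s *\<^sub>R q) *v u \<le> mexp (s *\<^sub>R q) *v v"
  by (rule mv_mono) (auto intro: Q_nonneg)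

lemma T_const: "Q_matrix q \<Longrightarrow> mexp (s *\<^sub>R q) *v (u + vec c) = mexp (s *\<^sub>R q) *v u + vec c"
  using mexp_row[OF Q_row, of q s]
  by (simp add: matrix_vector_right_distrib vec_scaleR_one matrix_vector_mult_scaleR)

lemma T_vec: "Q_matrix q \<Longrightarrow> mexp (s *\<^sub>R q) *v vec c = vec c"
  using T_const[of q s 0 c] by simp

lemma T_integrable: "(\<lambda>s. mexp (s *\<^sub>R q) *v w) integrable_on {a..b}"
  by (rule integrable_continuous_interval[OF mexp_cont])

lemma integral_nth:
  assumes "g integrable_on S"
  shows "integral S g $ i = integral S (\<lambda>s. g s $ i)"
  using integral_linear[OF assms bounded_linear_vec_nth[of i]] by (simp add: o_def)

lemma comp_integrable: "(\<lambda>s. (mexp (s *\<^sub>R q) *v w) $ i) integrable_on {a..b}"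
  using integrable_linear[OF T_integrable bounded_linear_vec_nth] by (simp add: o_def)

lemma T_ftc:
  assumes "h \<ge> 0"
  shows "integral {0..h} (\<lambda>s. mexp (s *\<^sub>R q) *v (q *v w)) = mexp (h *\<^sub>R q) *v w - w"
proof -
  have "((\<lambda>s. mexp (s *\<^sub>R q) *v (q *v w)) has_integral
        (mexp (h *\<^sub>R q) *v w - mexp (0 *\<^sub>R q) *v w)) {0..h}"
    by (rule fundamental_theorem_of_calculus[OF assms mexp_deriv])
  then show ?thesis using mexp_zero[of q] by (simp add: integral_unique)
qed

lemma Sq_incr:
  assumes "h \<ge> 0"
  shows "Sq q fq h u - u = integral {0..h} (\<lambda>s. mexp (s *\<^sub>R q) *v (q *v u + fq))"
proof -
  have "integral {0..h} (\<lambda>s. mexp (s *\<^sub>R q) *v (q *v u + fq)) =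
        integral {0..h} (\<lambda>s. mexp (s *\<^sub>R q) *v (q *v u) + mexp (s *\<^sub>R q) *v fq)"
    by (simp add: matrix_vector_right_distrib)
  also have "\<dots> = integral {0..h} (\<lambda>s. mexp (s *\<^sub>R q) *v (q *v u)) + integral {0..h} (\<lambda>s. mexp (s *\<^sub>R q) *v fq)"
    by (rule integral_add[OF T_integrable T_integrable])
  finally show ?thesis using T_ftc[OF assms, of q u] by (simp add: Sq_def)
qed

lemma T_bound_le:
  assumes "Q_matrix q" "s \<ge> 0" "\<And>j. w $ j \<le> B"
  shows "(mexp (s *\<^sub>R q) *v w) $ i \<le> B"
proof -
  have "w \<le> vec B" using assms(3) by (simp add: less_eq_vec_def)
  then have "mexp (s *\<^sub>R q) *v w \<le> vec B" using T_mono[OF assms(1,2)] T_vec[OF assms(1)] by metis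
  then show ?thesis by (simp add: less_eq_vec_def)
qed

lemma T_bound_ge:
  assumes "Q_matrix q" "s \<ge> 0" "\<And>j. w $ j \<ge> B"
  shows "(mexp (s *\<^sub>R q) *v w) $ i \<ge> B"
proof -
  have "vec B \<le> w" using assms(3) by (simp add: less_eq_vec_def)
  then have "vec B \<le> mexp (s *\<^sub>R q) *v w" using T_mono[OF assms(1,2)] T_vec[OF assms(1)] by metis
  then show ?thesis by (simp add: less_eq_vec_def)
qed

lemma Sq_upper:
  assumes "Q_matrix q" "h \<ge> 0" "\<And>i. (q *v u + fq) $ i \<le> B"
  shows "Sq q fq h u \<le> u + vec (h * B)"
proof -
  have "(Sq q fq h u - u) $ i \<le> h * B" for i
  proof -
    have "(Sq q fq h u - u) $ i = integral {0..h} (\<lambda>s. (mexp (s *\<^sub>R q) *v (q *v u + fq)) $ i)"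
      unfolding Sq_incr[OF assms(2)] by (rule integral_nth[OF T_integrable])
    also have "\<dots> \<le> integral {0..h} (\<lambda>s. B)"
      apply (rule integral_le[OF comp_integrable Henstock_Kurzweil_Integration.integrable_const_ivl])
      apply (rule T_bound_le[OF assms(1) _ assms(3)])
      apply simp
      done
    also have "\<dots> = h * B" using assms(2) by simp
    finally show ?thesis .
  qed
  then show ?thesis by (simp add: less_eq_vec_def algebra_simps)
qed

lemma Sq_lower:
  assumes "Q_matrix q" "h \<ge> 0" "\<And>i. (q *v u + fq) $ i \<ge> - B"
  shows "u - vec (h * B) \<le> Sq q fq h u"
proof -
  have "(Sq q fq h u - u) $ i \<ge> - (h * B)" for i
  proof -
    have "(Sq q fq h u - u) $ i = integral {0..h} (\<lambda>s. (mexp (s *\<^sub>R q) *v (q *v u + fq)) $ i)"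
      unfolding Sq_incr[OF assms(2)] by (rule integral_nth[OF T_integrable])
    also have "\<dots> \<ge> integral {0..h} (\<lambda>s. - B)"
      apply (rule integral_le[OF Henstock_Kurzweil_Integration.integrable_const_ivl comp_integrable])
      apply (rule T_bound_ge[OF assms(1) _ assms(3)])
      apply simp
      done
    moreover have "integral {0..h} (\<lambda>s. - B) = - (h * B)" using assms(2) by simp
    ultimately show ?thesis by linarith
  qed
  then show ?thesis by (simp add: less_eq_vec_def algebra_simps)
qed

lemma Sq_mono: "Q_matrix q \<Longrightarrow> h \<ge> 0 \<Longrightarrow> u \<le> v \<Longrightarrow> Sq q fq h u \<le> Sq q fq h v"
  unfolding Sq_def using T_mono[of q h u v] by (simp add: add_right_mono)

lemma Sq_const: assumes "Q_matrix q" shows "Sq q fq h (u + vec c) = Sq q fq h u + vec c"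
  unfolding Sq_def T_const[OF assms] by (simp add: algebra_simps)

lemma Sq_zero: "Sq q fq 0 u = u"
  unfolding Sq_def using mexp_zero[of q] by simp

lemma Sq_f0: "Sq q 0 h u = mexp (h *\<^sub>R q) *v u"
  unfolding Sq_def by simp

lemma T_shift_integral:
  assumes "a \<ge> 0" "b \<ge> 0"
  shows "integral {0..a+b} (\<lambda>s. mexp (s *\<^sub>R q) *v fq) =
         integral {0..a} (\<lambda>s. mexp (s *\<^sub>R q) *v fq) + mexp (a *\<^sub>R q) *v integral {0..b} (\<lambda>s. mexp (s *\<^sub>R q) *v fq)"
proof -
  let ?g = "\<lambda>s. mexp (s *\<^sub>R q) *v fq"
  have "integral {0..a+b} ?g = integral {0..a} ?g + integral {a..a+b} ?g"
    using Henstock_Kurzweil_Integration.integral_combine[where a=0 and c=a and b="a+b" and f="?g"] assms T_integrable[of q fq 0 "a+b"] by simp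
  moreover have "integral {a..a+b} ?g = integral {0..b} (?g \<circ> (+) a)"
    using integral_shift_Icc_real[of 0 b ?g a] by (simp add: add.commute)
  moreover have "(?g \<circ> (+) a) = (\<lambda>r. mexp (a *\<^sub>R q) *v (mexp (r *\<^sub>R q) *v fq))"
    by (rule ext) (simp add: mexp_add matrix_vector_mul_assoc)
  moreover have "integral {0..b} (\<lambda>r. mexp (a *\<^sub>R q) *v (mexp (r *\<^sub>R q) *v fq)) =
                 mexp (a *\<^sub>R q) *v integral {0..b} ?g"
    using integral_linear[OF T_integrable matrix_vector_mul_bounded_linear[of "mexp (a *\<^sub>R q)"]]
    by (simp add: o_def)
  ultimately show ?thesis by simp
qed

lemma Sq_semigroup:
  assumes "a \<ge> 0" "b \<ge> 0"
  shows "Sq q fq (a + b) u = Sq q fq a (Sq q fq b u)"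
  unfolding Sq_def T_shift_integral[OF assms]
  by (simp add: mexp_add[of a b q, unfolded scaleR_add_left] matrix_vector_mul_assoc[symmetric] matrix_vector_right_distrib algebra_simps)


lemma rowsum_shift: "Q_matrix q \<Longrightarrow> (q *v u) $ i = (\<Sum>j\<in>UNIV. q$i$j * (u$j - u$i))"
  by (simp add: Q_matrix_def matrix_vector_mult_def right_diff_distrib sum_subtractf sum_distrib_right[symmetric])

lemma qu_le:
  assumes Q: "Q_matrix q" and b: "vec m \<le> u" "u \<le> vec M"
  shows "(q *v u) $ i \<le> (q *v (\<chi> j. if j = i then 0 else M - m)) $ i"
proof -
  let ?v = "(\<chi> j. if j = i then 0 else M - m) :: real^'a"
  have "(q *v u) $ i = (\<Sum>j\<in>UNIV. q$i$j * (u$j - u$i))" by (rule rowsum_shift[OF Q])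
  also have "\<dots> \<le> (\<Sum>j\<in>UNIV. q$i$j * (?v$j - ?v$i))"
  proof (rule sum_mono)
    fix j
    show "q$i$j * (u$j - u$i) \<le> q$i$j * (?v$j - ?v$i)"
    proof (cases "j = i")
      case False
      have "q$i$j \<ge> 0" using Q False by (simp add: Q_matrix_def)
      moreover have "u$j - u$i \<le> M - m"
      proof -
        have "u$j \<le> M" "m \<le> u$i" using b by (simp_all add: less_eq_vec_def)
        then show ?thesis by linarith
      qed
      ultimately show ?thesis using False by (simp add: mult_left_mono)
    qed simp
  qed
  also have "\<dots> = (q *v ?v) $ i" by (rule rowsum_shift[OF Q, symmetric])
  finally show ?thesis .
qed




definition hs_of :: "real set \<Rightarrow> real list" where
  "hs_of \<pi> = (let ts = sorted_list_of_set \<pi> in map2 (\<lambda>a b. b - a) ts (tl ts))"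

lemma diffs_sum: "xs \<noteq> [] \<Longrightarrow> sum_list (map2 (\<lambda>a b. b - a) xs (tl xs)) = last xs - hd (xs::real list)"
proof (induction xs)
  case Nil then show ?case by simp
next
  case (Cons x xs)
  then show ?case by (cases xs) auto
qed

lemma diffs_nonneg: "sorted xs \<Longrightarrow> \<forall>h\<in>set (map2 (\<lambda>a b. b - a) xs (tl xs)). h \<ge> (0::real)"
proof (induction xs)
  case Nil then show ?case by simp
next
  case (Cons x xs)
  then show ?case by (cases xs) auto
qed

lemma sorted_hd_last: "sorted xs \<Longrightarrow> x \<in> set xs \<Longrightarrow> hd xs \<le> x \<and> x \<le> last (xs::real list)"
proof (induction xs)
  case Nil then show ?case by simp
next
  case (Cons y ys)
  then show ?case by (cases ys) auto
qed

lemma part_props: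
  assumes "\<pi> \<in> partitions_upto t"
  shows "(\<forall>h\<in>set (hs_of \<pi>). h \<ge> 0) \<and> sum_list (hs_of \<pi>) = t"
proof -
  have fin: "finite \<pi>" and sub: "\<pi> \<subseteq> {0..}" and z: "0 \<in> \<pi>" and mx: "Max \<pi> = t"
    using assms by (auto simp: partitions_upto_def)
  define ts where "ts = sorted_list_of_set \<pi>"
  have st: "set ts = \<pi>" "sorted ts" using fin unfolding ts_def by auto
  have ne: "ts \<noteq> []" using st z by auto
  have "hd ts \<in> \<pi>" "last ts \<in> \<pi>" using ne st(1) by auto
  then have "hd ts \<ge> 0" "last ts \<le> t" using sub mx fin by auto
  moreover have "hd ts \<le> 0" using sorted_hd_last[OF st(2), of 0] st z by auto
  moreover have "t \<in> \<pi>" using mx fin z Max_in by auto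
  then have "t \<le> last ts" using sorted_hd_last[OF st(2), of t] st by auto
  ultimately have "hd ts = 0" "last ts = t" by auto
  then show ?thesis unfolding hs_of_def Let_def ts_def[symmetric]
    using diffs_sum[OF ne] diffs_nonneg[OF st(2)] by simp
qed

lemma part_zero: "partitions_upto 0 = {{0}}"
proof -
  have "\<pi> = {0}" if "\<pi> \<in> partitions_upto 0" for \<pi>
  proof -
    have fin: "finite \<pi>" and sub: "\<pi> \<subseteq> {0..}" and z: "0 \<in> \<pi>" and mx: "Max \<pi> = 0"
      using that by (auto simp: partitions_upto_def)
    have "x = 0" if "x \<in> \<pi>" for x using sub that Max_ge[OF fin that] mx by auto
    then show ?thesis using z by auto
  qed
  moreover have "{0} \<in> partitions_upto 0" by (simp add: partitions_upto_def)
  ultimately show ?thesis by blast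
qed

lemma hs_of_zero: "hs_of {0} = []"
  by (simp add: hs_of_def)

definition upart :: "nat \<Rightarrow> real \<Rightarrow> real set" where
  "upart n t = (\<lambda>j. real j * t / real n) ` {0..n}"

lemma upart_in:
  assumes n: "n \<ge> 1" and t: "t \<ge> 0"
  shows "upart n t \<in> partitions_upto t"
proof -
  have le: "real j * t / real n \<le> t" if "j \<le> n" for j
  proof -
    have "real j * t \<le> real n * t" using that t by (simp add: mult_right_mono)
    then show ?thesis using n by (simp add: divide_le_eq mult.commute)
  qed
  have "Max (upart n t) = t"
  proof (rule Max_eqI)
    show "finite (upart n t)" by (simp add: upart_def)
    show "y \<le> t" if "y \<in> upart n t" for y using that le by (auto simp: upart_def)
    show "t \<in> upart n t" using n unfolding upart_def by (intro image_eqI[of _ _ n]) auto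
  qed
  moreover have "upart n t \<subseteq> {0..}" using t by (auto simp: upart_def)
  moreover have "0 \<in> upart n t" unfolding upart_def by (intro image_eqI[of _ _ 0]) auto
  ultimately show ?thesis by (simp add: partitions_upto_def upart_def)
qed

lemma upart_hs:
  assumes n: "n \<ge> 1" and t: "t > 0"
  shows "hs_of (upart n t) = replicate n (t / real n)"
proof -
  define g where "g j = real j * t / real n" for j :: nat
  have mono: "g i \<le> g j" if "i \<le> j" for i j
    using that t n unfolding g_def by (simp add: divide_right_mono mult_right_mono)
  have inj: "inj g" unfolding inj_def g_def using t n by auto
  let ?xs = "map g [0..<Suc n]"
  have "sorted_list_of_set (upart n t) = ?xs"
  proof (rule sorted_distinct_set_unique)
    show "sorted (sorted_list_of_set (upart n t))" by simp
    show "distinct (sorted_list_of_set (upart n t))" by simp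
    show "sorted ?xs" unfolding sorted_map by (rule sorted_wrt_mono_rel[OF _ sorted_upt]) (use mono in auto)
    show "distinct ?xs" unfolding distinct_map using inj_on_subset[OF inj subset_UNIV] by (simp del: upt_Suc)
    have "set ?xs = g ` {0..<Suc n}" by (simp only: set_map set_upt)
    also have "\<dots> = upart n t" unfolding upart_def g_def atLeastLessThanSuc_atLeastAtMost ..
    finally have "set ?xs = upart n t" .
    then show "set (sorted_list_of_set (upart n t)) = set ?xs" by (simp add: upart_def)
  qed
  moreover have "map2 (\<lambda>a b. b - a) ?xs (tl ?xs) = replicate n (t / real n)"
  proof (rule nth_equalityI)
    show "length (map2 (\<lambda>a b. b - a) ?xs (tl ?xs)) = length (replicate n (t / real n))" by simp
    fix i assume "i < length (map2 (\<lambda>a b. b - a) ?xs (tl ?xs))"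
    then have i: "i < n" by simp
    have "map2 (\<lambda>a b. b - a) ?xs (tl ?xs) ! i = g (Suc i) - g i"
      using i by (simp add: nth_tl del: upt_Suc)
    also have "\<dots> = t / real n" unfolding g_def by (simp add: diff_divide_distrib[symmetric] algebra_simps)
    finally show "map2 (\<lambda>a b. b - a) ?xs (tl ?xs) ! i = replicate n (t / real n) ! i" using i by simp
  qed
  ultimately show ?thesis by (simp add: hs_of_def)
qed

lemma foldr_replicate: "foldr F (replicate n h) u = (F h ^^ n) u"
  by (induction n) auto

lemma le_plus_inv:
  fixes x y C :: real
  assumes "\<And>n. n \<ge> 1 \<Longrightarrow> x \<le> y + C / real n"
  shows "x \<le> y"
proof (rule ccontr)
  assume "\<not> x \<le> y"
  then have d: "x - y > 0" by simp
  obtain n :: nat where nn: "real n > \<bar>C\<bar> / (x - y)" using reals_Archimedean2 by blast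
  have n1: "n \<ge> 1" using nn d
    by (metis divide_nonneg_pos abs_ge_zero less_one not_le of_nat_0 of_nat_less_iff not_less)
  then have np: "real n > 0" by simp
  have "\<bar>C\<bar> < (x - y) * real n" using nn d by (simp add: pos_divide_less_eq mult.commute)
  then have "\<bar>C\<bar> / real n < x - y" using np by (simp add: pos_divide_less_eq)
  moreover have "C / real n \<le> \<bar>C\<bar> / real n" using np by (simp add: divide_right_mono)
  ultimately show False using assms[OF n1] by linarith
qed

lemma abstract_final:
  fixes S :: "(real^'n) set" and a :: "nat \<Rightarrow> real^'n"
  assumes Sne: "S \<noteq> {}"
    and A1: "\<And>x. x \<in> S \<Longrightarrow> x \<le> vec Mb"
    and A2: "\<And>n. n \<ge> 1 \<Longrightarrow> a n \<in> S"
    and A3: "\<And>x. x \<in> S \<Longrightarrow> \<exists>C. \<forall>n\<ge>1. x \<le> a n + vec (C / real n)"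
  shows "vsup S = vsup (a ` {1..}) \<and> (\<lambda>k. a (2 ^ k)) \<longlonglongrightarrow> vsup S"
proof -
  have bddS: "bdd_above ((\<lambda>x. x $ i) ` S)" for i
    using A1 unfolding bdd_above_def less_eq_vec_def by auto
  have bddA: "bdd_above ((\<lambda>n. a n $ i) ` {1..})" for i
    using A1 A2 unfolding bdd_above_def less_eq_vec_def by (auto simp: Ball_def)
  have Ane: "{1::nat..} \<noteq> {}" by auto
  have upper: "a n $ i \<le> vsup S $ i" if "n \<ge> 1" for n i
    unfolding vsup_def using cSUP_upper[OF A2[OF that] bddS] by simp
  have eq: "vsup S $ i = vsup (a ` {1..}) $ i" for i
  proof (rule antisym)
    show "vsup S $ i \<le> vsup (a ` {1..}) $ i"
      unfolding vsup_def vec_lambda_beta image_image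
    proof (rule cSUP_least[OF Sne])
      fix x assume x: "x \<in> S"
      obtain C where C: "\<forall>n\<ge>1. x \<le> a n + vec (C / real n)" using A3[OF x] by blast
      show "x $ i \<le> (SUP n\<in>{1..}. a n $ i)"
      proof (rule le_plus_inv[of _ _ C])
        fix n :: nat assume n: "n \<ge> 1"
        have "x $ i \<le> a n $ i + C / real n" using C n by (auto simp: less_eq_vec_def)
        also have "a n $ i \<le> (SUP n\<in>{1..}. a n $ i)" using n by (intro cSUP_upper bddA) auto
        finally show "x $ i \<le> (SUP n\<in>{1..}. a n $ i) + C / real n" by simp
      qed
    qed
    show "vsup (a ` {1..}) $ i \<le> vsup S $ i"
      unfolding vsup_def vec_lambda_beta image_image
      by (rule cSUP_least[OF Ane]) (use upper in \<open>auto simp: vsup_def\<close>)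
  qed
  have lim: "(\<lambda>k. a (2 ^ k)) \<longlonglongrightarrow> vsup S"
  proof (rule vec_tendstoI)
    fix i
    show "(\<lambda>k. a (2 ^ k) $ i) \<longlonglongrightarrow> vsup S $ i"
    proof (rule LIMSEQ_I)
      fix r :: real assume r: "r > 0"
      have "vsup S $ i - r / 2 < Sup ((\<lambda>x. x $ i) ` S)" using r by (simp add: vsup_def)
      then obtain y where y: "y \<in> (\<lambda>x. x $ i) ` S" "vsup S $ i - r / 2 < y"
        using less_cSupE Sne by blast
      then obtain x where x: "x \<in> S" "x $ i = y" by auto
      obtain C where C: "\<forall>n\<ge>1. x \<le> a n + vec (C / real n)" using A3[OF x(1)] by blast
      obtain K :: nat where K: "real K > 2 * \<bar>C\<bar> / r" using reals_Archimedean2 by blast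
      show "\<exists>no. \<forall>k\<ge>no. norm (a (2 ^ k) $ i - vsup S $ i) < r"
      proof (intro exI allI impI)
        fix k assume k: "k \<ge> K"
        have n1: "(2::nat) ^ k \<ge> 1" by simp
        have pk: "real ((2::nat) ^ k) > real k" by simp
        have "real ((2::nat) ^ k) > 2 * \<bar>C\<bar> / r" using K k pk by linarith
        then have "2 * \<bar>C\<bar> < r * real ((2::nat) ^ k)" using r by (simp add: pos_divide_less_eq mult.commute)
        then have "\<bar>C\<bar> / real ((2::nat) ^ k) < r / 2" by (simp add: divide_less_eq)
        moreover have "C / real ((2::nat) ^ k) \<le> \<bar>C\<bar> / real ((2::nat) ^ k)" by (simp add: divide_right_mono)
        moreover have "x $ i \<le> a (2 ^ k) $ i + C / real ((2::nat) ^ k)"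
        proof -
          have "x \<le> a (2 ^ k) + vec (C / real ((2::nat) ^ k))" using C n1 by blast
          then show ?thesis by (simp add: less_eq_vec_def)
        qed
        moreover have "a (2 ^ k) $ i \<le> vsup S $ i" using upper[OF n1] .
        ultimately have "\<bar>a (2 ^ k) $ i - vsup S $ i\<bar> < r" using y x by linarith
        then show "norm (a (2 ^ k) $ i - vsup S $ i) < r" by simp
      qed
    qed
  qed
  show ?thesis using eq lim by (simp add: vec_eq_iff)
qed


locale nset =
  fixes P :: "(real^'n^'n) set" and f :: "real^'n^'n \<Rightarrow> real^'n" and q0 :: "real^'n^'n"
  assumes QP: "\<And>q. q \<in> P \<Longrightarrow> Q_matrix q"
    and q0: "q0 \<in> P" "f q0 = 0"
    and fsup: "\<And>i. (SUP q\<in>P. f q $ i) = 0" "\<And>i. bdd_above ((\<lambda>q. f q $ i) ` P)"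
    and Qfin: "\<And>u i. bdd_above ((\<lambda>q. (q *v u + f q) $ i) ` P)"
begin

lemma Pne: "P \<noteq> {}" using q0 by auto

lemma f_le0: "q \<in> P \<Longrightarrow> f q \<le> 0"
  unfolding less_eq_vec_def
  using cSUP_upper[of q P "\<lambda>q. f q $ i" for i, OF _ fsup(2)] fsup(1) by auto

lemma Sq_le_const:
  assumes "q \<in> P" "h \<ge> 0" "u \<le> vec M"
  shows "Sq q (f q) h u \<le> vec M"
proof -
  have Q: "Q_matrix q" using QP assms(1) .
  have "Sq q (f q) h u \<le> Sq q (f q) h (0 + vec M)" using Sq_mono[OF Q assms(2)] assms(3) by simp
  also have "\<dots> = Sq q (f q) h 0 + vec M" by (rule Sq_const[OF Q])
  also have "Sq q (f q) h 0 \<le> 0 + vec (h * 0)"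
    by (rule Sq_upper[OF Q assms(2)]) (use f_le0[OF assms(1)] in \<open>simp add: less_eq_vec_def\<close>)
  finally show ?thesis by simp
qed

lemma le_vec_norm: "u \<le> vec (norm u)"
  unfolding less_eq_vec_def using component_le_norm_cart[of u] by (auto simp: abs_le_iff)

lemma Eh_nth: "Eh P f h u $ i = (SUP q\<in>P. Sq q (f q) h u $ i)"
  by (simp add: Eh_def vsup_def image_image)

lemma Eh_bdd: "h \<ge> 0 \<Longrightarrow> bdd_above ((\<lambda>q. Sq q (f q) h u $ i) ` P)"
  unfolding bdd_above_def
  using Sq_le_const[OF _ _ le_vec_norm[of u]] by (auto simp: less_eq_vec_def)

lemma Eh_ge: assumes q: "q \<in> P" and h: "h \<ge> 0" shows "Sq q (f q) h u \<le> Eh P f h u"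
  unfolding less_eq_vec_def Eh_nth
proof
  fix i show "Sq q (f q) h u $ i \<le> (SUP q\<in>P. Sq q (f q) h u $ i)"
    by (rule cSUP_upper[OF q Eh_bdd[OF h]])
qed

lemma Eh_le: assumes h: "h \<ge> 0" and H: "\<And>q. q \<in> P \<Longrightarrow> Sq q (f q) h u \<le> v" shows "Eh P f h u \<le> v"
  unfolding less_eq_vec_def Eh_nth
proof
  fix i show "(SUP q\<in>P. Sq q (f q) h u $ i) \<le> v $ i"
    by (rule cSUP_least[OF Pne]) (use H in \<open>simp add: less_eq_vec_def\<close>)
qed

lemma Eh_mono: assumes h: "h \<ge> 0" and uv: "u \<le> v" shows "Eh P f h u \<le> Eh P f h v"
proof (rule Eh_le[OF h])
  fix q assume q: "q \<in> P"
  show "Sq q (f q) h u \<le> Eh P f h v"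
    using order_trans[OF Sq_mono[OF QP[OF q] h uv] Eh_ge[OF q h]] .
qed

lemma Eh_const_le: assumes h: "h \<ge> 0" shows "Eh P f h (u + vec c) \<le> Eh P f h u + vec c"
proof (rule Eh_le[OF h])
  fix q assume q: "q \<in> P"
  show "Sq q (f q) h (u + vec c) \<le> Eh P f h u + vec c"
    unfolding Sq_const[OF QP[OF q]] using Eh_ge[OF q h] by (rule add_right_mono)
qed

lemma Eh_const: assumes "h \<ge> 0" shows "Eh P f h (u + vec c) = Eh P f h u + vec c"
proof (rule antisym)
  show "Eh P f h (u + vec c) \<le> Eh P f h u + vec c" by (rule Eh_const_le[OF assms])
  have e: "(u + vec c) + vec (- c) = u" by (simp add: vec_eq_iff)
  have "Eh P f h u = Eh P f h ((u + vec c) + vec (- c))" unfolding e ..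
  also have "\<dots> \<le> Eh P f h (u + vec c) + vec (-c)" by (rule Eh_const_le[OF assms])
  finally have le: "Eh P f h u \<le> Eh P f h (u + vec c) + vec (-c)" .
  show "Eh P f h u + vec c \<le> Eh P f h (u + vec c)"
    unfolding less_eq_vec_def
  proof
    fix i
    have "Eh P f h u $ i \<le> Eh P f h (u + vec c) $ i + - c" using le by (simp add: less_eq_vec_def)
    then show "(Eh P f h u + vec c) $ i \<le> Eh P f h (u + vec c) $ i" by simp
  qed
qed

lemma Eh_zero: "Eh P f 0 u = u"
  unfolding vec_eq_iff Eh_nth Sq_zero using Pne by simp

lemma Eh_subadd:
  assumes "a \<ge> 0" "b \<ge> 0"
  shows "Eh P f (a + b) u \<le> Eh P f a (Eh P f b u)"
proof (rule Eh_le)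
  show "a + b \<ge> 0" using assms by simp
  fix q assume q: "q \<in> P"
  have "Sq q (f q) (a + b) u = Sq q (f q) a (Sq q (f q) b u)" by (rule Sq_semigroup[OF assms])
  also have "\<dots> \<le> Sq q (f q) a (Eh P f b u)" by (rule Sq_mono[OF QP[OF q] assms(1) Eh_ge[OF q assms(2)]])
  also have "\<dots> \<le> Eh P f a (Eh P f b u)" by (rule Eh_ge[OF q assms(1)])
  finally show "Sq q (f q) (a + b) u \<le> Eh P f a (Eh P f b u)" .
qed

lemma Eh_box_up: assumes h: "h \<ge> 0" and u: "u \<le> vec M" shows "Eh P f h u \<le> vec M"
  using Eh_le[OF h Sq_le_const[OF _ h u]] .

lemma Sq_q0: "Sq q0 (f q0) h u = mexp (h *\<^sub>R q0) *v u"
  using q0(2) by (simp add: Sq_f0)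

lemma Eh_box_low:
  assumes "h \<ge> 0" "vec m \<le> u" shows "vec m \<le> Eh P f h u"
proof -
  have Q: "Q_matrix q0" using QP q0(1) .
  have "vec m = mexp (h *\<^sub>R q0) *v vec m" by (rule T_vec[OF Q, symmetric])
  also have "\<dots> \<le> mexp (h *\<^sub>R q0) *v u" by (rule T_mono[OF Q assms])
  also have "\<dots> = Sq q0 (f q0) h u" by (rule Sq_q0[symmetric])
  also have "\<dots> \<le> Eh P f h u" by (rule Eh_ge[OF q0(1) assms(1)])
  finally show ?thesis .
qed

definition Bup :: "real \<Rightarrow> real \<Rightarrow> real" where
  "Bup m M = (\<Sum>i\<in>UNIV. \<bar>SUP q\<in>P. (q *v (\<chi> j. if j = i then 0 else M - m) + f q) $ i\<bar>)"

definition Blow :: "real \<Rightarrow> real \<Rightarrow> real" where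
  "Blow m M = (\<Sum>i\<in>UNIV. \<Sum>j\<in>UNIV. \<bar>q0$i$j\<bar>) * (M - m)"

lemma Bup_nonneg: "Bup m M \<ge> 0" unfolding Bup_def by (rule sum_nonneg) simp

lemma Blow_nonneg: "m \<le> M \<Longrightarrow> Blow m M \<ge> 0" unfolding Blow_def
  by (intro mult_nonneg_nonneg sum_nonneg) auto

lemma q0_low:
  assumes b: "vec m \<le> u" "u \<le> vec M"
  shows "(q0 *v u) $ i \<ge> - Blow m M"
proof -
  have mM: "m \<le> M" using order_trans[OF b] by (simp add: less_eq_vec_def)
  have Q: "Q_matrix q0" using QP q0(1) .
  have "(q0 *v u) $ i = (\<Sum>j\<in>UNIV. q0$i$j * (u$j - u$i))" by (rule rowsum_shift[OF Q])
  also have "\<dots> \<ge> (\<Sum>j\<in>UNIV. - (\<bar>q0$i$j\<bar> * (M - m)))"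
  proof (rule sum_mono)
    fix j
    have "u$j \<le> M" "m \<le> u$i" "u$i \<le> M" "m \<le> u$j" using b by (simp_all add: less_eq_vec_def)
    then have "\<bar>u$j - u$i\<bar> \<le> M - m" by linarith
    then have "\<bar>q0$i$j * (u$j - u$i)\<bar> \<le> \<bar>q0$i$j\<bar> * (M - m)"
      by (simp add: abs_mult mult_left_mono)
    then show "- (\<bar>q0$i$j\<bar> * (M - m)) \<le> q0$i$j * (u$j - u$i)" by linarith
  qed
  finally have "(q0 *v u) $ i \<ge> - ((\<Sum>j\<in>UNIV. \<bar>q0$i$j\<bar>) * (M - m))"
    by (simp add: sum_negf sum_distrib_right)
  moreover have "(\<Sum>j\<in>UNIV. \<bar>q0$i$j\<bar>) \<le> (\<Sum>i\<in>UNIV. \<Sum>j\<in>UNIV. \<bar>q0$i$j\<bar>)"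
    by (rule member_le_sum[where f="\<lambda>i. \<Sum>j\<in>UNIV. \<bar>q0$i$j\<bar>"]) (auto intro: sum_nonneg)
  moreover have "(\<Sum>j\<in>UNIV. \<bar>q0$i$j\<bar>) * (M - m) \<le> (\<Sum>i\<in>UNIV. \<Sum>j\<in>UNIV. \<bar>q0$i$j\<bar>) * (M - m)"
    using calculation(2) mM by (intro mult_right_mono) auto
  ultimately show ?thesis unfolding Blow_def by linarith
qed

lemma Eh_incr_up:
  assumes h: "h \<ge> 0" and b: "vec m \<le> u" "u \<le> vec M"
  shows "Eh P f h u \<le> u + vec (h * Bup m M)"
proof (rule Eh_le[OF h])
  fix q assume q: "q \<in> P"
  show "Sq q (f q) h u \<le> u + vec (h * Bup m M)"
  proof (rule Sq_upper[OF QP[OF q] h])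
    fix i
    let ?v = "(\<chi> j. if j = i then 0 else M - m) :: real^'n"
    have "(q *v u + f q) $ i \<le> (q *v ?v + f q) $ i"
      unfolding vector_add_component using qu_le[OF QP[OF q] b, of i] by (rule add_right_mono)
    also have "\<dots> \<le> (SUP q\<in>P. (q *v ?v + f q) $ i)"
      by (rule cSUP_upper[OF q Qfin])
    also have "\<dots> \<le> \<bar>SUP q\<in>P. (q *v ?v + f q) $ i\<bar>" by (rule abs_ge_self)
    also have "\<dots> \<le> Bup m M" unfolding Bup_def
      by (rule member_le_sum[where f="\<lambda>i. \<bar>SUP q\<in>P. (q *v (\<chi> j. if j = i then 0 else M - m) + f q) $ i\<bar>"]) simp_all
    finally show "(q *v u + f q) $ i \<le> Bup m M" .
  qed
qed

lemma Eh_incr_low: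
  assumes h: "h \<ge> 0" and b: "vec m \<le> u" "u \<le> vec M"
  shows "u - vec (h * Blow m M) \<le> Eh P f h u"
proof -
  have "u - vec (h * Blow m M) \<le> Sq q0 (f q0) h u"
    by (rule Sq_lower[OF QP[OF q0(1)] h]) (use q0_low[OF b] q0(2) in simp)
  also have "\<dots> \<le> Eh P f h u" by (rule Eh_ge[OF q0(1) h])
  finally show ?thesis .
qed

lemma iter_mono: assumes h: "h \<ge> 0" and uv: "u \<le> v" shows "(Eh P f h ^^ k) u \<le> (Eh P f h ^^ k) v"
proof (induction k)
  case 0 then show ?case using uv by simp
next
  case (Suc k) show ?case unfolding funpow.simps o_apply by (rule Eh_mono[OF h Suc.IH])
qed

lemma iter_const: assumes h: "h \<ge> 0" shows "(Eh P f h ^^ k) (u + vec c) = (Eh P f h ^^ k) u + vec c"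
proof (induction k)
  case 0 then show ?case by simp
next
  case (Suc k) show ?case unfolding funpow.simps o_apply Suc.IH by (rule Eh_const[OF h])
qed

lemma iter_box: assumes h: "h \<ge> 0" and b: "vec m \<le> u" "u \<le> vec M"
  shows "vec m \<le> (Eh P f h ^^ k) u \<and> (Eh P f h ^^ k) u \<le> vec M"
proof (induction k)
  case 0 then show ?case using b by simp
next
  case (Suc k) show ?case unfolding funpow.simps o_apply using Eh_box_low[OF h] Eh_box_up[OF h] Suc.IH by blast
qed

lemma iter_low:
  assumes h: "h \<ge> 0" and b: "vec m \<le> u" "u \<le> vec M"
  shows "u - vec (real k * h * Blow m M) \<le> (Eh P f h ^^ k) u"
proof (induction k)
  case 0 then show ?case by (simp add: less_eq_vec_def)
next
  case (Suc k)
  let ?z = "(Eh P f h ^^ k) u"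
  have bz: "vec m \<le> ?z" "?z \<le> vec M" using iter_box[OF h b] by auto
  have "u - vec (real (Suc k) * h * Blow m M) = (u - vec (real k * h * Blow m M)) - vec (h * Blow m M)"
    by (simp add: vec_eq_iff algebra_simps)
  also have "\<dots> \<le> ?z - vec (h * Blow m M)" using Suc.IH by (simp add: less_eq_vec_def)
  also have "\<dots> \<le> Eh P f h ?z" by (rule Eh_incr_low[OF h bz])
  finally show ?case by simp
qed

lemma split_le:
  assumes "\<delta> \<ge> 0" "r \<ge> 0"
  shows "Eh P f (real k * \<delta> + r) u \<le> (Eh P f \<delta> ^^ k) (Eh P f r u)"
proof (induction k arbitrary: u)
  case 0 then show ?case by simp
next
  case (Suc k)
  have "Eh P f (real (Suc k) * \<delta> + r) u = Eh P f (\<delta> + (real k * \<delta> + r)) u"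
    by (simp add: algebra_simps)
  also have "\<dots> \<le> Eh P f \<delta> (Eh P f (real k * \<delta> + r) u)"
    by (rule Eh_subadd) (use assms in auto)
  also have "\<dots> \<le> Eh P f \<delta> ((Eh P f \<delta> ^^ k) (Eh P f r u))"
    by (rule Eh_mono[OF assms(1) Suc.IH])
  finally show ?case by simp
qed

lemma lemX:
  assumes d: "\<delta> > 0" and b: "vec m \<le> w" "w \<le> vec M"
  shows "(\<forall>h\<in>set hs. h \<ge> 0) \<Longrightarrow> \<exists>K. real K * \<delta> \<le> sum_list hs \<and> sum_list hs \<le> real K * \<delta> + real (length hs) * \<delta> \<and>
     foldr (Eh P f) hs w \<le> (Eh P f \<delta> ^^ K) w + vec (real (length hs) * \<delta> * Bup m M)"
proof (induction hs)
  case Nil then show ?case by (intro exI[of _ 0]) (simp add: less_eq_vec_def)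
next
  case (Cons h hs)
  have h0: "h \<ge> 0" and hs0: "\<forall>h\<in>set hs. h \<ge> 0" using Cons.prems by auto
  obtain K' where K': "real K' * \<delta> \<le> sum_list hs" "sum_list hs \<le> real K' * \<delta> + real (length hs) * \<delta>"
    "foldr (Eh P f) hs w \<le> (Eh P f \<delta> ^^ K') w + vec (real (length hs) * \<delta> * Bup m M)"
    using Cons.IH[OF hs0] by blast
  define k where "k = nat \<lfloor>h / \<delta>\<rfloor>"
  define r where "r = h - real k * \<delta>"
  have fl: "real_of_int \<lfloor>h / \<delta>\<rfloor> \<le> h / \<delta>" "h / \<delta> < real_of_int \<lfloor>h / \<delta>\<rfloor> + 1"
    using floor_correct[of "h / \<delta>"] by simp_all
  have fl0: "\<lfloor>h / \<delta>\<rfloor> \<ge> 0" using h0 d by simp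
  have rk: "real k = real_of_int \<lfloor>h / \<delta>\<rfloor>" unfolding k_def using fl0 by simp
  have kh: "real k * \<delta> \<le> h" using fl(1) d unfolding rk by (simp add: le_divide_eq)
  then have r0: "r \<ge> 0" unfolding r_def by simp
  have "h < (real_of_int \<lfloor>h / \<delta>\<rfloor> + 1) * \<delta>" by (rule iffD1[OF pos_divide_less_eq[OF d] fl(2)])
  then have hk: "h < real k * \<delta> + \<delta>" unfolding rk by (simp add: algebra_simps)
  then have rd: "r \<le> \<delta>" unfolding r_def by simp
  let ?y = "foldr (Eh P f) hs w"
  let ?z = "(Eh P f \<delta> ^^ K') w"
  let ?c = "real (length hs) * \<delta> * Bup m M"
  have d0: "\<delta> \<ge> 0" using d by simp
  have bz: "vec m \<le> ?z" "?z \<le> vec M" using iter_box[OF d0 b] by auto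
  have "Eh P f h ?y = Eh P f (real k * \<delta> + r) ?y" unfolding r_def by simp
  also have "\<dots> \<le> (Eh P f \<delta> ^^ k) (Eh P f r ?y)" by (rule split_le[OF d0 r0])
  also have "\<dots> \<le> (Eh P f \<delta> ^^ k) (?z + vec (\<delta> * Bup m M + ?c))"
  proof (rule iter_mono[OF d0])
    have "Eh P f r ?y \<le> Eh P f r (?z + vec ?c)" by (rule Eh_mono[OF r0 K'(3)])
    also have "\<dots> = Eh P f r ?z + vec ?c" by (rule Eh_const[OF r0])
    also have "\<dots> \<le> ?z + vec (r * Bup m M) + vec ?c"
      using Eh_incr_up[OF r0 bz] by (rule add_right_mono)
    also have "\<dots> \<le> ?z + vec (\<delta> * Bup m M + ?c)"
      using mult_right_mono[OF rd Bup_nonneg[of m M]] by (simp add: less_eq_vec_def)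
    finally show "Eh P f r ?y \<le> ?z + vec (\<delta> * Bup m M + ?c)" .
  qed
  also have "\<dots> = (Eh P f \<delta> ^^ (k + K')) w + vec (\<delta> * Bup m M + ?c)"
    using iter_const[OF d0, of k ?z] by (simp add: funpow_add)
  finally have fin: "foldr (Eh P f) (h # hs) w \<le> (Eh P f \<delta> ^^ (k + K')) w + vec (real (length (h # hs)) * \<delta> * Bup m M)"
    by (simp add: algebra_simps)
  show ?case
  proof (intro exI[of _ "k + K'"] conjI fin)
    show "real (k + K') * \<delta> \<le> sum_list (h # hs)"
      using kh K'(1) by (simp add: algebra_simps)
    show "sum_list (h # hs) \<le> real (k + K') * \<delta> + real (length (h # hs)) * \<delta>"
      using hk K'(2) by (simp add: algebra_simps)
  qed
qed

lemma main_bound: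
  assumes t: "t > 0" and n: "n \<ge> 1" and hs0: "\<forall>h\<in>set hs. h \<ge> 0" and sumt: "sum_list hs = t"
    and b: "vec m \<le> u" "u \<le> vec M"
  shows "foldr (Eh P f) hs u \<le> (Eh P f (t / real n) ^^ n) u + vec (real (length hs) * (t / real n) * (Bup m M + Blow m M))"
proof -
  define \<delta> where "\<delta> = t / real n"
  have d: "\<delta> > 0" unfolding \<delta>_def using t n by simp
  have d0: "\<delta> \<ge> 0" using d by simp
  have tn: "t = real n * \<delta>" unfolding \<delta>_def using n by simp
  obtain K where K: "real K * \<delta> \<le> t" "t \<le> real K * \<delta> + real (length hs) * \<delta>"
    "foldr (Eh P f) hs u \<le> (Eh P f \<delta> ^^ K) u + vec (real (length hs) * \<delta> * Bup m M)"
    using lemX[OF d b hs0] sumt by blast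
  have "real K \<le> real n" using K(1) d tn by (simp add: mult_le_cancel_right)
  then have Kn: "K \<le> n" by simp
  have "real n * \<delta> \<le> (real K + real (length hs)) * \<delta>" using K(2) tn by (simp add: distrib_right)
  then have "real n \<le> real K + real (length hs)" using d by (simp add: mult_le_cancel_right)
  then have nK: "real (n - K) \<le> real (length hs)" using Kn by (simp add: of_nat_diff)
  have mM: "m \<le> M" using order_trans[OF b] by (simp add: less_eq_vec_def)
  have B0: "Blow m M \<ge> 0" by (rule Blow_nonneg[OF mM])
  have "real (n - K) * \<delta> * Blow m M \<le> real (length hs) * \<delta> * Blow m M"
    by (intro mult_right_mono nK d0 B0)
  then have "(Eh P f \<delta> ^^ K) u - vec (real (length hs) * \<delta> * Blow m M)
        \<le> (Eh P f \<delta> ^^ K) u - vec (real (n - K) * \<delta> * Blow m M)"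
    by (simp add: less_eq_vec_def)
  also have "\<dots> = (Eh P f \<delta> ^^ K) (u - vec (real (n - K) * \<delta> * Blow m M))"
  proof -
    have e: "\<And>x::real^'n. x - vec (real (n - K) * \<delta> * Blow m M) = x + vec (- (real (n - K) * \<delta> * Blow m M))"
      by (simp add: vec_eq_iff)
    show ?thesis unfolding e by (rule iter_const[OF d0, symmetric])
  qed
  also have "\<dots> \<le> (Eh P f \<delta> ^^ K) ((Eh P f \<delta> ^^ (n - K)) u)"
    by (rule iter_mono[OF d0 iter_low[OF d0 b]])
  also have "\<dots> = (Eh P f \<delta> ^^ (K + (n - K))) u"
    by (simp only: funpow_add o_apply)
  also have "\<dots> = (Eh P f \<delta> ^^ n) u"
    using Kn by simp
  finally have le0: "(Eh P f \<delta> ^^ K) u - vec (real (length hs) * \<delta> * Blow m M) \<le> (Eh P f \<delta> ^^ n) u" .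
  have le: "(Eh P f \<delta> ^^ K) u \<le> (Eh P f \<delta> ^^ n) u + vec (real (length hs) * \<delta> * Blow m M)"
    unfolding less_eq_vec_def
  proof
    fix i
    have "(Eh P f \<delta> ^^ K) u $ i - real (length hs) * \<delta> * Blow m M \<le> (Eh P f \<delta> ^^ n) u $ i"
      using le0 by (simp add: less_eq_vec_def)
    then show "(Eh P f \<delta> ^^ K) u $ i \<le> ((Eh P f \<delta> ^^ n) u + vec (real (length hs) * \<delta> * Blow m M)) $ i"
      by simp
  qed
  show ?thesis unfolding \<delta>_def[symmetric] less_eq_vec_def
  proof
    fix i
    have "foldr (Eh P f) hs u $ i \<le> (Eh P f \<delta> ^^ K) u $ i + real (length hs) * \<delta> * Bup m M"
      using K(3) by (simp add: less_eq_vec_def)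
    moreover have "(Eh P f \<delta> ^^ K) u $ i \<le> (Eh P f \<delta> ^^ n) u $ i + real (length hs) * \<delta> * Blow m M"
      using le by (simp add: less_eq_vec_def)
    ultimately show "foldr (Eh P f) hs u $ i \<le> ((Eh P f \<delta> ^^ n) u + vec (real (length hs) * \<delta> * (Bup m M + Blow m M))) $ i"
      by (simp add: algebra_simps)
  qed
qed





lemma Epi_foldr: "Epi P f \<pi> u = foldr (Eh P f) (hs_of \<pi>) u"
  unfolding Epi_def hs_of_def Let_def by (simp add: Eh_zero)

lemma foldr_box:
  assumes "vec m \<le> u" "u \<le> vec M"
  shows "(\<forall>h\<in>set hs. h \<ge> 0) \<Longrightarrow> vec m \<le> foldr (Eh P f) hs u \<and> foldr (Eh P f) hs u \<le> vec M"
proof (induction hs)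
  case Nil then show ?case using assms by simp
next
  case (Cons h hs)
  then have h: "h \<ge> 0" and IH: "vec m \<le> foldr (Eh P f) hs u" "foldr (Eh P f) hs u \<le> vec M" by auto
  show ?case using Eh_box_up[OF h IH(2)] Eh_box_low[OF h IH(1)] by simp
qed

lemma iter_zero: "(Eh P f 0 ^^ n) u = u"
  by (induction n) (simp_all add: Eh_zero)

lemma final:
  assumes t: "t \<ge> 0"
  shows "Nisio P f t u0 = vsup ((\<lambda>n. (Eh P f (t / real n) ^^ n) u0) ` {1..}) \<and>
         (\<lambda>n. (Eh P f (t / 2 ^ n) ^^ (2 ^ n)) u0) \<longlonglongrightarrow> Nisio P f t u0"
proof -
  define S where "S = (\<lambda>\<pi>. Epi P f \<pi> u0) ` partitions_upto t"
  define a where "a n = (Eh P f (t / real n) ^^ n) u0" for n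
  define M0 where "M0 = norm u0"
  have b: "vec (- M0) \<le> u0" "u0 \<le> vec M0"
  proof -
    have c: "- norm u0 \<le> u0 $ i \<and> u0 $ i \<le> norm u0" for i
      using component_le_norm_cart[of u0 i] by (simp add: abs_le_iff)
    show "vec (- M0) \<le> u0" "u0 \<le> vec M0" unfolding M0_def less_eq_vec_def using c by simp_all
  qed
  have Sne: "S \<noteq> {}" unfolding S_def using upart_in[of 1 t] t by auto
  have A1: "x \<le> vec M0" if xS: "x \<in> S" for x
  proof -
    obtain \<pi> where \<pi>: "\<pi> \<in> partitions_upto t" "x = Epi P f \<pi> u0" using xS unfolding S_def by auto
    show ?thesis using foldr_box[OF b] part_props[OF \<pi>(1)] \<pi>(2) by (simp add: Epi_foldr)
  qed
  have A23: "(\<forall>n. n \<ge> 1 \<longrightarrow> a n \<in> S) \<and> (\<forall>x\<in>S. \<exists>C. \<forall>n\<ge>1. x \<le> a n + vec (C / real n))"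
  proof (cases "t = 0")
    case True
    have an: "a n = u0" for n unfolding a_def True by (simp add: iter_zero)
    have S0: "S = {u0}" unfolding S_def True part_zero by (simp add: Epi_foldr hs_of_zero)
    show ?thesis unfolding an S0 by (auto intro: exI[of _ 0])
  next
    case False
    then have tp: "t > 0" using t by simp
    have A2: "a n \<in> S" if n: "n \<ge> 1" for n
    proof -
      have "a n = Epi P f (upart n t) u0"
        unfolding a_def Epi_foldr upart_hs[OF n tp] foldr_replicate ..
      then show ?thesis unfolding S_def using upart_in[OF n t] by auto
    qed
    have A3: "\<exists>C. \<forall>n\<ge>1. x \<le> a n + vec (C / real n)" if x: "x \<in> S" for x
    proof -
      obtain \<pi> where \<pi>: "\<pi> \<in> partitions_upto t" "x = Epi P f \<pi> u0" using x unfolding S_def by auto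
      have pp: "\<forall>h\<in>set (hs_of \<pi>). h \<ge> 0" "sum_list (hs_of \<pi>) = t" using part_props[OF \<pi>(1)] by auto
      obtain B where B: "\<And>n. n \<ge> 1 \<Longrightarrow> x \<le> a n + vec (real (length (hs_of \<pi>)) * (t / real n) * B)"
        using main_bound[OF tp _ pp b] unfolding \<pi>(2) Epi_foldr a_def by blast
      show ?thesis
      proof (intro exI allI impI)
        fix n :: nat assume n: "n \<ge> 1"
        have "real (length (hs_of \<pi>)) * (t / real n) * B = real (length (hs_of \<pi>)) * t * B / real n"
          by simp
        then show "x \<le> a n + vec (real (length (hs_of \<pi>)) * t * B / real n)" using B[OF n] by simp
      qed
    qed
    show ?thesis using A2 A3 by blast
  qed
  have R: "vsup S = vsup (a ` {1..}) \<and> (\<lambda>k. a (2 ^ k)) \<longlonglongrightarrow> vsup S"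
    by (rule abstract_final[OF Sne A1]) (use A23 in auto)
  have N: "Nisio P f t u0 = vsup S" unfolding Nisio_def S_def ..
  have e2: "(\<lambda>k. a (2 ^ k)) = (\<lambda>n. (Eh P f (t / 2 ^ n) ^^ (2 ^ n)) u0)"
    unfolding a_def by simp
  have R1: "vsup S = vsup (a ` {1..})" and R2: "(\<lambda>k. a (2 ^ k)) \<longlonglongrightarrow> vsup S" using R by auto
  show ?thesis unfolding N
  proof
    show "vsup S = vsup ((\<lambda>n. (Eh P f (t / real n) ^^ n) u0) ` {1..})" using R1 unfolding a_def .
    show "(\<lambda>n. (Eh P f (t / 2 ^ n) ^^ (2 ^ n)) u0) \<longlonglongrightarrow> vsup S" using R2 unfolding e2 .
  qed
qed


end

theorem mainTheorem7:
  fixes P :: "(real^'n^'n) set" and f :: "real^'n^'n \<Rightarrow> real^'n"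
    and q0 :: "real^'n^'n" and t :: real and u0 :: "real^'n"
  assumes QP: "\<And>q. q \<in> P \<Longrightarrow> Q_matrix q"
    and q0: "q0 \<in> P" "f q0 = 0"
    and fsup: "\<And>i. (SUP q\<in>P. f q $ i) = 0" "\<And>i. bdd_above ((\<lambda>q. f q $ i) ` P)"
    and Qfin: "\<And>u i. bdd_above ((\<lambda>q. (q *v u + f q) $ i) ` P)"
    and t: "t \<ge> 0"
  shows "Nisio P f t u0 = vsup ((\<lambda>n. (Eh P f (t / real n) ^^ n) u0) ` {1..}) \<and>
         (\<lambda>n. (Eh P f (t / 2 ^ n) ^^ (2 ^ n)) u0) \<longlonglongrightarrow> Nisio P f t u0"
  proof -
  interpret nset P f q0
    by (unfold_locales) (use QP q0 fsup Qfin in auto)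
  show ?thesis by (rule final[OF t])
qed

end
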